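(* Let $A$ be a complex semisimple Banach algebra with a unit. Then $\mathrm{Soc}(A)$ is infinite-dimensional if and only if every element of $\mathrm{Soc}(A)$ is a topological divisor of zero in the normed algebra $\mathrm{Soc}(A)$ (with the norm inherited from $A$). *)

theory Defs
  imports "HOL-Analysis.Analysis"
begin

text \<open>A complex unital Banach algebra: a real unital Banach algebra (type class
  banach + real_normed_algebra_1) together with a complex scalar multiplication
  sc extending the real one, compatible with the norm and with the product.\<close>

definition complex_banach_algebra_1 ::
  "(complex \<Rightarrow> 'a::{banach,real_normed_algebra_1} \<Rightarrow> 'a) \<Rightarrow> bool" where
  "complex_banach_algebra_1 sc \<longleftrightarrow>
     (\<forall>c d x. sc c (sc d x) = sc (c * d) x) \<and>
     (\<forall>x. sc 1 x = x) \<and>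
     (\<forall>c x y. sc c (x + y) = sc c x + sc c y) \<and>
     (\<forall>c d x. sc (c + d) x = sc c x + sc d x) \<and>
     (\<forall>r x. sc (complex_of_real r) x = scaleR r x) \<and>
     (\<forall>c x. norm (sc c x) = cmod c * norm x) \<and>
     (\<forall>c x y. sc c (x * y) = sc c x * y \<and> sc c (x * y) = x * sc c y)"

definition left_ideal :: "(complex \<Rightarrow> 'a::real_normed_algebra_1 \<Rightarrow> 'a) \<Rightarrow> 'a set \<Rightarrow> bool" where
  "left_ideal sc L \<longleftrightarrow> 0 \<in> L \<and> (\<forall>x\<in>L. \<forall>y\<in>L. x + y \<in> L) \<and>
     (\<forall>c. \<forall>x\<in>L. sc c x \<in> L) \<and> (\<forall>a. \<forall>x\<in>L. a * x \<in> L)"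

definition minimal_left_ideal :: "(complex \<Rightarrow> 'a::real_normed_algebra_1 \<Rightarrow> 'a) \<Rightarrow> 'a set \<Rightarrow> bool" where
  "minimal_left_ideal sc L \<longleftrightarrow> left_ideal sc L \<and> L \<noteq> {0} \<and>
     (\<forall>J. left_ideal sc J \<and> J \<subseteq> L \<and> J \<noteq> {0} \<longrightarrow> J = L)"

definition maximal_left_ideal :: "(complex \<Rightarrow> 'a::real_normed_algebra_1 \<Rightarrow> 'a) \<Rightarrow> 'a set \<Rightarrow> bool" where
  "maximal_left_ideal sc L \<longleftrightarrow> left_ideal sc L \<and> L \<noteq> UNIV \<and>
     (\<forall>J. left_ideal sc J \<and> L \<subseteq> J \<and> J \<noteq> UNIV \<longrightarrow> J = L)"

definition jacobson_radical :: "(complex \<Rightarrow> 'a::real_normed_algebra_1 \<Rightarrow> 'a) \<Rightarrow> 'a set" where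
  "jacobson_radical sc = \<Inter> {L. maximal_left_ideal sc L}"

definition semisimple :: "(complex \<Rightarrow> 'a::real_normed_algebra_1 \<Rightarrow> 'a) \<Rightarrow> bool" where
  "semisimple sc \<longleftrightarrow> jacobson_radical sc = {0}"

definition cspan :: "(complex \<Rightarrow> 'a::real_normed_algebra_1 \<Rightarrow> 'a) \<Rightarrow> 'a set \<Rightarrow> 'a set" where
  "cspan sc S = {x. \<exists>F c. finite F \<and> F \<subseteq> S \<and> x = (\<Sum>v\<in>F. sc (c v) v)}"

text \<open>Socle: the sum of all minimal left ideals (= {0} if there are none).\<close>
definition socle :: "(complex \<Rightarrow> 'a::real_normed_algebra_1 \<Rightarrow> 'a) \<Rightarrow> 'a set" where
  "socle sc = cspan sc (\<Union> {L. minimal_left_ideal sc L})"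

definition cfinite_dim :: "(complex \<Rightarrow> 'a::real_normed_algebra_1 \<Rightarrow> 'a) \<Rightarrow> 'a set \<Rightarrow> bool" where
  "cfinite_dim sc S \<longleftrightarrow> (\<exists>F. finite F \<and> F \<subseteq> S \<and> S \<subseteq> cspan sc F)"

definition topological_divisor_of_zero_in :: "'a::real_normed_algebra_1 set \<Rightarrow> 'a \<Rightarrow> bool" where
  "topological_divisor_of_zero_in B a \<longleftrightarrow>
     (\<exists>z. (\<forall>n. z n \<in> B \<and> norm (z n) = 1) \<and>
          ((\<lambda>n. a * z n) \<longlonglongrightarrow> 0 \<or> (\<lambda>n. z n * a) \<longlonglongrightarrow> 0))"

end

theory Submission
  imports Defs "HOL-Complex_Analysis.Cauchy_Integral_Formula"
begin


locale cba =
  fixes sc :: "complex \<Rightarrow> 'a::{banach,real_normed_algebra_1} \<Rightarrow> 'a"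
  assumes cba: "complex_banach_algebra_1 sc"
begin

lemma sc_assoc: "sc c (sc d x) = sc (c * d) x"
  using cba unfolding complex_banach_algebra_1_def by blast
lemma sc_one[simp]: "sc 1 x = x"
  using cba unfolding complex_banach_algebra_1_def by blast
lemma sc_add_right: "sc c (x + y) = sc c x + sc c y"
  using cba unfolding complex_banach_algebra_1_def by blast
lemma sc_add_left: "sc (c + d) x = sc c x + sc d x"
  using cba unfolding complex_banach_algebra_1_def by blast
lemma sc_real: "sc (complex_of_real r) x = scaleR r x"
  using cba unfolding complex_banach_algebra_1_def by blast
lemma sc_norm: "norm (sc c x) = cmod c * norm x"
  using cba unfolding complex_banach_algebra_1_def by blast
lemma sc_mult_left: "sc c (x * y) = sc c x * y"
  using cba unfolding complex_banach_algebra_1_def by blast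
lemma sc_mult_right: "sc c (x * y) = x * sc c y"
  using cba unfolding complex_banach_algebra_1_def by blast

lemma sc_zero_left[simp]: "sc 0 x = 0"
  using sc_real[of 0 x] by simp
lemma sc_zero_right[simp]: "sc c 0 = 0"
  using sc_add_right[of c 0 0] by simp
lemma sc_minus_right: "sc c (- x) = - sc c x"
  by (rule add.inverse_unique[symmetric]) (simp add: sc_add_right[symmetric])
lemma sc_diff_right: "sc c (x - y) = sc c x - sc c y"
  using sc_add_right[of c x "-y"] sc_minus_right by simp
lemma sc_minus_left: "sc (- c) x = - sc c x"
  by (rule add.inverse_unique[symmetric]) (simp add: sc_add_left[symmetric])
lemma sc_diff_left: "sc (c - d) x = sc c x - sc d x"
  using sc_add_left[of c "-d" x] sc_minus_left by simp
lemma sc_sum: "sc c (sum g F) = (\<Sum>v\<in>F. sc c (g v))"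
  by (induction F rule: infinite_finite_induct) (auto simp: sc_add_right)
lemma sc_real1: "sc (of_real r) x = r *\<^sub>R x"
  by (rule sc_real)

lemma sc_eq_zero: "sc c x = 0 \<longleftrightarrow> c = 0 \<or> x = 0"
  using sc_norm[of c x] by auto

lemma cspan_zero: "0 \<in> cspan sc U"
  unfolding cspan_def by (rule CollectI, rule exI[of _ "{}"]) auto

lemma cspan_base: "x \<in> U \<Longrightarrow> x \<in> cspan sc U"
  unfolding cspan_def by (rule CollectI, rule exI[of _ "{x}"], rule exI[of _ "\<lambda>_. 1"]) auto

lemma cspan_sc: "x \<in> cspan sc U \<Longrightarrow> sc c x \<in> cspan sc U"
proof -
  assume "x \<in> cspan sc U"
  then obtain F d where F: "finite F" "F \<subseteq> U" "x = (\<Sum>v\<in>F. sc (d v) v)"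
    unfolding cspan_def by blast
  have "sc c x = (\<Sum>v\<in>F. sc (c * d v) v)"
    unfolding F(3) sc_sum by (rule sum.cong) (auto simp: sc_assoc)
  then show ?thesis unfolding cspan_def
    by (intro CollectI exI[of _ F] exI[of _ "\<lambda>v. c * d v"]) (use F in auto)
qed

lemma cspan_add: "x \<in> cspan sc U \<Longrightarrow> y \<in> cspan sc U \<Longrightarrow> x + y \<in> cspan sc U"
proof -
  assume "x \<in> cspan sc U" "y \<in> cspan sc U"
  then obtain F1 d1 F2 d2 where F: "finite F1" "F1 \<subseteq> U" "x = (\<Sum>v\<in>F1. sc (d1 v) v)"
    "finite F2" "F2 \<subseteq> U" "y = (\<Sum>v\<in>F2. sc (d2 v) v)"
    unfolding cspan_def by blast
  define e1 where "e1 v = (if v \<in> F1 then d1 v else 0)" for v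
  define e2 where "e2 v = (if v \<in> F2 then d2 v else 0)" for v
  have x: "x = (\<Sum>v\<in>F1 \<union> F2. sc (e1 v) v)"
    unfolding F(3) by (rule sum.mono_neutral_cong_left) (auto simp: F e1_def)
  have y: "y = (\<Sum>v\<in>F1 \<union> F2. sc (e2 v) v)"
    unfolding F(6) by (rule sum.mono_neutral_cong_left) (auto simp: F e2_def)
  have "x + y = (\<Sum>v\<in>F1 \<union> F2. sc (e1 v + e2 v) v)"
    unfolding x y sum.distrib[symmetric] by (simp add: sc_add_left)
  then show ?thesis using F unfolding cspan_def
    by (intro CollectI exI[of _ "F1 \<union> F2"] exI[of _ "\<lambda>v. e1 v + e2 v"]) auto
qed

lemma cspan_sum: "(\<And>v. v \<in> F \<Longrightarrow> g v \<in> cspan sc U) \<Longrightarrow> sum g F \<in> cspan sc U"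
  by (induction F rule: infinite_finite_induct) (auto simp: cspan_zero cspan_add)

lemma cspan_minimal:
  assumes "U \<subseteq> X" "0 \<in> X" "\<And>x y. x \<in> X \<Longrightarrow> y \<in> X \<Longrightarrow> x + y \<in> X"
    "\<And>c x. x \<in> X \<Longrightarrow> sc c x \<in> X"
  shows "cspan sc U \<subseteq> X"
proof
  fix x assume "x \<in> cspan sc U"
  then obtain F d where F: "finite F" "F \<subseteq> U" "x = (\<Sum>v\<in>F. sc (d v) v)"
    unfolding cspan_def by blast
  have "(\<Sum>v\<in>F. sc (d v) v) \<in> X" using F(1,2)
    by (induction F rule: finite_induct) (use assms in auto)
  then show "x \<in> X" using F by simp
qed

lemma cspan_mono_span: "V \<subseteq> cspan sc U \<Longrightarrow> cspan sc V \<subseteq> cspan sc U"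
  by (rule cspan_minimal) (auto simp: cspan_zero cspan_add cspan_sc)

lemma cspan_diff: "x \<in> cspan sc U \<Longrightarrow> y \<in> cspan sc U \<Longrightarrow> x - y \<in> cspan sc U"
  using cspan_add[of x U "sc (-1) y"] cspan_sc[of y U "-1"] by (simp add: sc_minus_left)

lemma cspan_scaleR: "x \<in> cspan sc U \<Longrightarrow> r *\<^sub>R x \<in> cspan sc U"
  using cspan_sc[of x U "of_real r"] by (simp add: sc_real)

end


context cba
begin

lemma li_zero: "left_ideal sc L \<Longrightarrow> 0 \<in> L"
  unfolding left_ideal_def by blast
lemma li_add: "left_ideal sc L \<Longrightarrow> x \<in> L \<Longrightarrow> y \<in> L \<Longrightarrow> x + y \<in> L"
  unfolding left_ideal_def by blast
lemma li_sc: "left_ideal sc L \<Longrightarrow> x \<in> L \<Longrightarrow> sc c x \<in> L"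
  unfolding left_ideal_def by blast
lemma li_mult: "left_ideal sc L \<Longrightarrow> x \<in> L \<Longrightarrow> a * x \<in> L"
  unfolding left_ideal_def by blast
lemma li_minus: "left_ideal sc L \<Longrightarrow> x \<in> L \<Longrightarrow> - x \<in> L"
  using li_mult[of L x "-1"] by simp
lemma li_diff: "left_ideal sc L \<Longrightarrow> x \<in> L \<Longrightarrow> y \<in> L \<Longrightarrow> x - y \<in> L"
  using li_add[of L x "-y"] li_minus[of L y] by simp

lemma li_principal: "left_ideal sc (range (\<lambda>b. b * w))"
  unfolding left_ideal_def
proof (intro conjI ballI allI)
  show "0 \<in> range (\<lambda>b. b * w)" by (rule range_eqI[of _ _ 0]) simp
  fix x y assume "x \<in> range (\<lambda>b. b * w)" "y \<in> range (\<lambda>b. b * w)"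
  then obtain b1 b2 where "x = b1 * w" "y = b2 * w" by blast
  then show "x + y \<in> range (\<lambda>b. b * w)" by (intro range_eqI[of _ _ "b1 + b2"]) (simp add: distrib_right)
next
  fix c x assume "x \<in> range (\<lambda>b. b * w)"
  then obtain b1 where "x = b1 * w" by blast
  then show "sc c x \<in> range (\<lambda>b. b * w)" by (intro range_eqI[of _ _ "sc c b1"]) (simp add: sc_mult_left)
next
  fix a x assume "x \<in> range (\<lambda>b. b * w)"
  then obtain b1 where "x = b1 * w" by blast
  then show "a * x \<in> range (\<lambda>b. b * w)" by (intro range_eqI[of _ _ "a * b1"]) (simp add: mult.assoc)
qed

lemma minimal_li: "minimal_left_ideal sc L \<Longrightarrow> left_ideal sc L"
  unfolding minimal_left_ideal_def by blast

lemma minimal_nonzero: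
  assumes "minimal_left_ideal sc L" shows "\<exists>x\<in>L. x \<noteq> 0"
proof -
  have "L \<noteq> {0}" using assms unfolding minimal_left_ideal_def by (elim conjE)
  moreover have "0 \<in> L" using li_zero[OF minimal_li[OF assms]] .
  ultimately show ?thesis by blast
qed

lemma minimal_eq:
  assumes "minimal_left_ideal sc L" "left_ideal sc J" "J \<subseteq> L" "x \<in> J" "x \<noteq> 0"
  shows "J = L"
  using assms unfolding minimal_left_ideal_def by blast

lemma sq_zero_in_max:
  assumes J: "left_ideal sc J" and sq: "\<And>x y. x \<in> J \<Longrightarrow> y \<in> J \<Longrightarrow> x * y = 0"
    and M: "maximal_left_ideal sc M" and x: "x \<in> J"
  shows "x \<in> M"
proof (rule ccontr)
  assume xM: "x \<notin> M"
  have MI: "left_ideal sc M" and MU: "M \<noteq> UNIV"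
    and Mmax: "\<And>N. left_ideal sc N \<Longrightarrow> M \<subseteq> N \<Longrightarrow> N \<noteq> UNIV \<Longrightarrow> N = M"
    using M unfolding maximal_left_ideal_def by blast+
  define N where "N = {m + b * x | m b. m \<in> M}"
  have NI: "left_ideal sc N"
    unfolding left_ideal_def
  proof (intro conjI ballI allI)
    show "0 \<in> N" unfolding N_def using li_zero[OF MI] by (intro CollectI exI[of _ 0]) auto
    fix u v assume "u \<in> N" "v \<in> N"
    then obtain m1 b1 m2 b2 where "u = m1 + b1 * x" "v = m2 + b2 * x" "m1 \<in> M" "m2 \<in> M"
      unfolding N_def by blast
    then show "u + v \<in> N" unfolding N_def using li_add[OF MI]
      by (intro CollectI exI[of _ "m1 + m2"] exI[of _ "b1 + b2"]) (auto simp: algebra_simps)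
  next
    fix c u assume "u \<in> N"
    then obtain m1 b1 where "u = m1 + b1 * x" "m1 \<in> M" unfolding N_def by blast
    then show "sc c u \<in> N" unfolding N_def using li_sc[OF MI]
      by (intro CollectI exI[of _ "sc c m1"] exI[of _ "sc c b1"]) (auto simp: sc_add_right sc_mult_left)
  next
    fix a u assume "u \<in> N"
    then obtain m1 b1 where "u = m1 + b1 * x" "m1 \<in> M" unfolding N_def by blast
    then show "a * u \<in> N" unfolding N_def using li_mult[OF MI]
      by (intro CollectI exI[of _ "a * m1"] exI[of _ "a * b1"]) (auto simp: algebra_simps)
  qed
  have MN: "M \<subseteq> N" unfolding N_def by (force intro: exI[of _ 0])
  have xN: "x \<in> N" unfolding N_def using li_zero[OF MI] by (force intro: exI[of _ 1])
  have "N = UNIV" using Mmax[OF NI MN] xN xM by blast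
  then have "1 \<in> N" by simp
  then obtain m b where mb: "1 = m + b * x" "m \<in> M" unfolding N_def by blast
  have bx: "b * x \<in> J" using li_mult[OF J x] .
  have "(1 + b * x) * m = 1"
  proof -
    have m: "m = 1 - b * x" using mb(1) by (simp add: algebra_simps)
    have "(1 + b * x) * (1 - b * x) = 1 - (b * x) * (b * x)" by (simp add: algebra_simps)
    then show ?thesis using sq[OF bx bx] m by simp
  qed
  then have one: "1 \<in> M" using li_mult[OF MI mb(2), of "1 + b * x"] by simp
  have "M = UNIV"
  proof (rule set_eqI)
    fix a show "a \<in> M \<longleftrightarrow> a \<in> UNIV" using li_mult[OF MI one, of a] by simp
  qed
  then show False using MU by simp
qed

end

locale ss = cba +
  assumes ssimple: "semisimple sc"
begin

lemma sq_zero: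
  assumes J: "left_ideal sc J" and sq: "\<And>x y. x \<in> J \<Longrightarrow> y \<in> J \<Longrightarrow> x * y = 0"
    and x: "x \<in> J"
  shows "x = 0"
proof -
  have "x \<in> jacobson_radical sc"
    unfolding jacobson_radical_def using sq_zero_in_max[OF J sq _ x] by blast
  then show ?thesis using ssimple unfolding semisimple_def by blast
qed

lemma minimal_idem:
  assumes L: "minimal_left_ideal sc L"
  shows "\<exists>f. f * f = f \<and> f \<in> L \<and> L = range (\<lambda>b. b * f)"
proof -
  have LI: "left_ideal sc L" using minimal_li[OF L] .
  obtain x y where xy: "x \<in> L" "y \<in> L" "y * x \<noteq> 0"
  proof (rule ccontr)
    assume "\<not> thesis"
    then have "\<And>x y. x \<in> L \<Longrightarrow> y \<in> L \<Longrightarrow> y * x = 0" using that by blast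
    then have "\<And>x. x \<in> L \<Longrightarrow> x = 0" using sq_zero[OF LI] by blast
    then show False using minimal_nonzero[OF L] by blast
  qed
  define Lx where "Lx = (\<lambda>y. y * x) ` L"
  have LxI: "left_ideal sc Lx"
    unfolding left_ideal_def Lx_def
  proof (intro conjI ballI allI)
    show "0 \<in> (\<lambda>y. y * x) ` L" using li_zero[OF LI] by (intro image_eqI[of _ _ 0]) auto
    fix u v assume "u \<in> (\<lambda>y. y * x) ` L" "v \<in> (\<lambda>y. y * x) ` L"
    then obtain a b where "u = a * x" "v = b * x" "a \<in> L" "b \<in> L" by blast
    then show "u + v \<in> (\<lambda>y. y * x) ` L" using li_add[OF LI]
      by (intro image_eqI[of _ _ "a + b"]) (auto simp: distrib_right)
  next
    fix c u assume "u \<in> (\<lambda>y. y * x) ` L"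
    then obtain a where "u = a * x" "a \<in> L" by blast
    then show "sc c u \<in> (\<lambda>y. y * x) ` L" using li_sc[OF LI]
      by (intro image_eqI[of _ _ "sc c a"]) (auto simp: sc_mult_left)
  next
    fix d u assume "u \<in> (\<lambda>y. y * x) ` L"
    then obtain a where "u = a * x" "a \<in> L" by blast
    then show "d * u \<in> (\<lambda>y. y * x) ` L" using li_mult[OF LI]
      by (intro image_eqI[of _ _ "d * a"]) (auto simp: mult.assoc)
  qed
  have "Lx \<subseteq> L" unfolding Lx_def using li_mult[OF LI xy(1)] by auto
  then have "Lx = L" using minimal_eq[OF L LxI, of "y * x"] xy unfolding Lx_def by blast
  then obtain e where e: "e \<in> L" "e * x = x" using xy(1) unfolding Lx_def by force
  have x0: "x \<noteq> 0" using xy(3) by auto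
  define K where "K = {z \<in> L. z * x = 0}"
  have KI: "left_ideal sc K"
    unfolding left_ideal_def K_def
    using li_zero[OF LI] li_add[OF LI] li_sc[OF LI] li_mult[OF LI]
    by (auto simp: distrib_right sc_mult_left[symmetric] mult.assoc)
  have K0: "K = {0}"
  proof (rule ccontr)
    assume "K \<noteq> {0}"
    then obtain z where "z \<in> K" "z \<noteq> 0" using li_zero[OF KI] by blast
    then have "K = L" using minimal_eq[OF L KI] unfolding K_def by blast
    then have "e * x = 0" using e(1) unfolding K_def by blast
    then show False using e(2) x0 by simp
  qed
  have "e * e - e \<in> K"
    unfolding K_def using li_diff[OF LI li_mult[OF LI e(1)] e(1)] e(2)
    by (simp add: algebra_simps mult.assoc)
  then have ee: "e * e = e" using K0 by simp
  have e0: "e \<noteq> 0" using e x0 by auto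
  have "range (\<lambda>b. b * e) \<subseteq> L" using li_mult[OF LI e(1)] by auto
  then have "range (\<lambda>b. b * e) = L"
    using minimal_eq[OF L li_principal, of e e] e0 ee by (metis rangeI)
  then show ?thesis using ee e(1) by blast
qed

end

context cba
begin

lemma minimal_right_translate:
  assumes L: "minimal_left_ideal sc L" and nz: "(\<lambda>y. y * a) ` L \<noteq> {0}"
  shows "minimal_left_ideal sc ((\<lambda>y. y * a) ` L)"
proof -
  have LI: "left_ideal sc L" using minimal_li[OF L] .
  have LaI: "left_ideal sc ((\<lambda>y. y * a) ` L)"
    unfolding left_ideal_def
  proof (intro conjI ballI allI)
    show "0 \<in> (\<lambda>y. y * a) ` L" using li_zero[OF LI] by (intro image_eqI[of _ _ 0]) auto
    fix u v assume "u \<in> (\<lambda>y. y * a) ` L" "v \<in> (\<lambda>y. y * a) ` L"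
    then obtain p q where "u = p * a" "v = q * a" "p \<in> L" "q \<in> L" by blast
    then show "u + v \<in> (\<lambda>y. y * a) ` L" using li_add[OF LI]
      by (intro image_eqI[of _ _ "p + q"]) (auto simp: distrib_right)
  next
    fix c u assume "u \<in> (\<lambda>y. y * a) ` L"
    then obtain p where "u = p * a" "p \<in> L" by blast
    then show "sc c u \<in> (\<lambda>y. y * a) ` L" using li_sc[OF LI]
      by (intro image_eqI[of _ _ "sc c p"]) (auto simp: sc_mult_left)
  next
    fix d u assume "u \<in> (\<lambda>y. y * a) ` L"
    then obtain p where "u = p * a" "p \<in> L" by blast
    then show "d * u \<in> (\<lambda>y. y * a) ` L" using li_mult[OF LI]
      by (intro image_eqI[of _ _ "d * p"]) (auto simp: mult.assoc)
  qed
  show ?thesis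
    unfolding minimal_left_ideal_def
  proof (intro conjI allI impI LaI nz)
    fix J assume J: "left_ideal sc J \<and> J \<subseteq> (\<lambda>y. y * a) ` L \<and> J \<noteq> {0}"
    define K where "K = {p \<in> L. p * a \<in> J}"
    have KI: "left_ideal sc K"
      unfolding left_ideal_def K_def
      using li_zero[OF LI] li_add[OF LI] li_sc[OF LI] li_mult[OF LI]
        li_zero[of J] li_add[of J] li_sc[of J] li_mult[of J] J
      by (auto simp: distrib_right sc_mult_left[symmetric] mult.assoc)
    obtain j where j: "j \<in> J" "j \<noteq> 0" using J li_zero[of J] by blast
    then obtain p where p: "p \<in> L" "j = p * a" using J by blast
    have "p \<in> K" "p \<noteq> 0" using p j unfolding K_def by auto
    then have "K = L" using minimal_eq[OF L KI] unfolding K_def by blast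
    then show "J = (\<lambda>y. y * a) ` L" using J unfolding K_def by blast
  qed
qed

end


context cba
begin

abbreviation "UU \<equiv> \<Union> {L. minimal_left_ideal sc L}"

lemma UU_soc: "x \<in> UU \<Longrightarrow> x \<in> socle sc"
  unfolding socle_def by (rule cspan_base)

lemma soc_zero: "0 \<in> socle sc" unfolding socle_def by (rule cspan_zero)
lemma soc_add: "x \<in> socle sc \<Longrightarrow> y \<in> socle sc \<Longrightarrow> x + y \<in> socle sc"
  unfolding socle_def by (rule cspan_add)
lemma soc_sc: "x \<in> socle sc \<Longrightarrow> sc c x \<in> socle sc"
  unfolding socle_def by (rule cspan_sc)
lemma soc_diff: "x \<in> socle sc \<Longrightarrow> y \<in> socle sc \<Longrightarrow> x - y \<in> socle sc"
  unfolding socle_def by (rule cspan_diff)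
lemma soc_scaleR: "x \<in> socle sc \<Longrightarrow> r *\<^sub>R x \<in> socle sc"
  unfolding socle_def by (rule cspan_scaleR)

lemma soc_left: "x \<in> socle sc \<Longrightarrow> a * x \<in> socle sc"
proof -
  assume x: "x \<in> socle sc"
  have "cspan sc UU \<subseteq> {x. a * x \<in> socle sc}"
  proof (rule cspan_minimal)
    show "UU \<subseteq> {x. a * x \<in> socle sc}"
    proof
      fix u assume "u \<in> UU"
      then obtain L where L: "minimal_left_ideal sc L" "u \<in> L" by blast
      then have "a * u \<in> L" using li_mult[OF minimal_li[OF L(1)]] by blast
      then show "u \<in> {x. a * x \<in> socle sc}" using L UU_soc by blast
    qed
  qed (auto simp: soc_zero soc_add distrib_left sc_mult_right[symmetric] soc_sc)
  then show ?thesis using x unfolding socle_def by blast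
qed

lemma soc_right: "x \<in> socle sc \<Longrightarrow> x * a \<in> socle sc"
proof -
  assume x: "x \<in> socle sc"
  have "cspan sc UU \<subseteq> {x. x * a \<in> socle sc}"
  proof (rule cspan_minimal)
    show "UU \<subseteq> {x. x * a \<in> socle sc}"
    proof
      fix u assume "u \<in> UU"
      then obtain L where L: "minimal_left_ideal sc L" "u \<in> L" by blast
      show "u \<in> {x. x * a \<in> socle sc}"
      proof (cases "(\<lambda>y. y * a) ` L = {0}")
        case True
        then have "u * a = 0" using L(2) by blast
        then show ?thesis using soc_zero by simp
      next
        case False
        then have "minimal_left_ideal sc ((\<lambda>y. y * a) ` L)"
          using minimal_right_translate[OF L(1)] by blast
        then show ?thesis using L(2) UU_soc by blast
      qed
    qed
  qed (auto simp: soc_zero soc_add distrib_right sc_mult_left[symmetric] soc_sc)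
  then show ?thesis using x unfolding socle_def by blast
qed

end

context ss
begin

lemma unit_ext:
  assumes "finite P"
    and "\<And>p. p \<in> P \<Longrightarrow> p * p = p \<and> minimal_left_ideal sc (range (\<lambda>b. b * p))"
  shows "\<exists>e\<in>socle sc. e * e = e \<and> (\<forall>p\<in>P. p * e = p)"
  using assms
proof (induction P rule: finite_induct)
  case empty
  then show ?case using soc_zero by (intro bexI[of _ 0]) auto
next
  case (insert p P)
  then obtain e where e: "e \<in> socle sc" "e * e = e" "\<And>q. q \<in> P \<Longrightarrow> q * e = q" by blast
  have pp: "p * p = p" and pmin: "minimal_left_ideal sc (range (\<lambda>b. b * p))"
    using insert.prems by auto
  define p' where "p' = p - p * e"
  show ?case
  proof (cases "p' = 0")
    case True
    then have "p * e = p" unfolding p'_def by simp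
    then show ?thesis using e by auto
  next
    case False
    define L' where "L' = (\<lambda>y. y * (1 - e)) ` range (\<lambda>b. b * p)"
    have p'L: "p' \<in> L'" unfolding L'_def p'_def
      by (rule image_eqI[of _ _ p]) (auto simp: algebra_simps intro: range_eqI[of _ _ 1])
    have "L' \<noteq> {0}" using p'L False by blast
    then have L'min: "minimal_left_ideal sc L'"
      unfolding L'_def by (rule minimal_right_translate[OF pmin])
    obtain g where g: "g * g = g" "g \<in> L'" "L' = range (\<lambda>b. b * g)"
      using minimal_idem[OF L'min] by blast
    obtain b where gb: "g = b * p * (1 - e)" using g(2) unfolding L'_def by blast
    have ge: "g * e = 0" unfolding gb using e(2) by (simp add: algebra_simps mult.assoc)
    obtain c where p'c: "p' = c * g" using p'L g(3) by blast
    have p'g: "p' * g = p'" unfolding p'c using g(1) by (simp add: mult.assoc)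
    have p'e: "p' * e = 0" unfolding p'_def using e(2) by (simp add: algebra_simps mult.assoc)
    define e' where "e' = e + g - e * g"
    have gS: "g \<in> socle sc" using g(2) L'min UU_soc by blast
    have e'S: "e' \<in> socle sc" unfolding e'_def
      using soc_add[OF e(1) gS] soc_left[OF gS, of e] soc_diff by blast
    have ge2: "g * (e * x) = 0" for x using ge by (metis mult.assoc mult_zero_left)
    have ee2: "e * (e * x) = e * x" for x using e(2) by (metis mult.assoc)
    have gg2: "g * (g * x) = g * x" for x using g(1) by (metis mult.assoc)
    have "e' * e' = e'" unfolding e'_def
      by (simp add: algebra_simps e(2) g(1) ge ge2 ee2 gg2)
    moreover have "q * e' = q" if "q \<in> P" for q
    proof -
      have qe: "q * e = q" using e(3) that .
      have qe2: "q * (e * x) = q * x" for x using qe by (metis mult.assoc)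
      show ?thesis unfolding e'_def by (simp add: algebra_simps qe qe2)
    qed
    moreover have "p * e' = p"
    proof -
      have h: "p * g - p * (e * g) = p - p * e"
        using p'g unfolding p'_def by (simp add: algebra_simps)
      have "p * e' = p * e + (p * g - p * (e * g))"
        unfolding e'_def by (simp add: algebra_simps)
      then show ?thesis using h by simp
    qed
    ultimately show ?thesis using e'S by auto
  qed
qed

lemma fin_soc_unit:
  assumes "cfinite_dim sc (socle sc)"
  shows "\<exists>e\<in>socle sc. \<forall>z\<in>socle sc. e * z = z \<and> z * e = z"
proof -
  obtain F where F: "finite F" "F \<subseteq> socle sc" "socle sc \<subseteq> cspan sc F"
    using assms unfolding cfinite_dim_def by blast
  have "\<forall>x\<in>F. \<exists>G. finite G \<and> G \<subseteq> UU \<and> x \<in> cspan sc G"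
  proof
    fix x assume "x \<in> F"
    then have "x \<in> cspan sc UU" using F unfolding socle_def by blast
    then obtain G d where "finite G" "G \<subseteq> UU" "x = (\<Sum>v\<in>G. sc (d v) v)"
      unfolding cspan_def by blast
    then show "\<exists>G. finite G \<and> G \<subseteq> UU \<and> x \<in> cspan sc G"
      unfolding cspan_def by blast
  qed
  then obtain Gx where Gx: "\<And>x. x \<in> F \<Longrightarrow> finite (Gx x) \<and> Gx x \<subseteq> UU \<and> x \<in> cspan sc (Gx x)"
    by metis
  define G where "G = \<Union> (Gx ` F)"
  have Gfin: "finite G" unfolding G_def using F(1) Gx by blast
  have GU: "G \<subseteq> UU" unfolding G_def using Gx by blast
  have "F \<subseteq> cspan sc G"
  proof
    fix x assume x: "x \<in> F"
    have "Gx x \<subseteq> cspan sc G" unfolding G_def using x cspan_base by blast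
    then have "cspan sc (Gx x) \<subseteq> cspan sc G" by (rule cspan_mono_span)
    then show "x \<in> cspan sc G" using Gx[OF x] by blast
  qed
  then have SG: "socle sc \<subseteq> cspan sc G" using F(3) cspan_mono_span by blast
  have "\<forall>g\<in>G. \<exists>f. f * f = f \<and> minimal_left_ideal sc (range (\<lambda>b. b * f)) \<and> g * f = g"
  proof
    fix g assume "g \<in> G"
    then obtain L where L: "minimal_left_ideal sc L" "g \<in> L" using GU by blast
    obtain f where f: "f * f = f" "f \<in> L" "L = range (\<lambda>b. b * f)" using minimal_idem[OF L(1)] by blast
    obtain b where "g = b * f" using L(2) f(3) by blast
    then have "g * f = g" using f(1) by (simp add: mult.assoc)
    then show "\<exists>f. f * f = f \<and> minimal_left_ideal sc (range (\<lambda>b. b * f)) \<and> g * f = g"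
      using f L by metis
  qed
  then obtain fg where fg: "\<And>g. g \<in> G \<Longrightarrow> fg g * fg g = fg g \<and> minimal_left_ideal sc (range (\<lambda>b. b * fg g)) \<and> g * fg g = g"
    by metis
  obtain e where e: "e \<in> socle sc" "e * e = e" "\<forall>p\<in>fg ` G. p * e = p"
    using unit_ext[of "fg ` G"] Gfin fg by blast
  have ge: "g * e = g" if "g \<in> G" for g
  proof -
    have "g * e = g * fg g * e" using fg[OF that] by simp
    also have "\<dots> = g * fg g" using e(3) that by (simp add: mult.assoc)
    finally show ?thesis using fg[OF that] by simp
  qed
  have "cspan sc G \<subseteq> {s. s * e = s}"
    by (rule cspan_minimal) (auto simp: ge distrib_right sc_mult_left[symmetric])
  then have right: "z * e = z" if "z \<in> socle sc" for z using SG that by blast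
  have left: "e * z = z" if z: "z \<in> socle sc" for z
  proof -
    define w where "w = z - e * z"
    have wS: "w \<in> socle sc" unfolding w_def using soc_diff[OF z soc_left[OF z]] .
    have ew: "e * w = 0" unfolding w_def using e(2) by (simp add: right_diff_distrib mult.assoc[symmetric])
    have sq: "x * y = 0" if xy0: "x \<in> range (\<lambda>b. b * w)" "y \<in> range (\<lambda>b. b * w)" for x y
    proof -
      obtain b1 b2 where xy: "x = b1 * w" "y = b2 * w" using xy0 by blast
      have "w * b2 \<in> socle sc" using soc_right[OF wS] .
      then have "w * b2 * e = w * b2" using right by blast
      then have "w * b2 * w = w * b2 * e * w" by simp
      also have "\<dots> = 0" using ew by (simp add: mult.assoc)
      finally have "w * b2 * w = 0" .
      then show ?thesis unfolding xy by (metis mult.assoc mult_zero_left mult_zero_right)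
    qed
    have wr: "w \<in> range (\<lambda>b. b * w)" by (rule range_eqI[of _ _ 1]) simp
    have "w = 0"
    proof (rule sq_zero[where J = "range (\<lambda>b. b * w)" and x = w])
      show "left_ideal sc (range (\<lambda>b. b * w))" by (rule li_principal)
      show "w \<in> range (\<lambda>b. b * w)" by (rule wr)
      fix x y assume "x \<in> range (\<lambda>b. b * w)" "y \<in> range (\<lambda>b. b * w)"
      then show "x * y = 0" by (rule sq)
    qed
    then show ?thesis unfolding w_def by simp
  qed
  show ?thesis using e(1) left right by blast
qed

lemma dirA:
  assumes "cfinite_dim sc (socle sc)"
  shows "\<exists>a\<in>socle sc. \<not> topological_divisor_of_zero_in (socle sc) a"
proof -
  obtain e where e: "e \<in> socle sc" "\<And>z. z \<in> socle sc \<Longrightarrow> e * z = z \<and> z * e = z"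
    using fin_soc_unit[OF assms] by blast
  have "\<not> topological_divisor_of_zero_in (socle sc) e"
  proof
    assume "topological_divisor_of_zero_in (socle sc) e"
    then obtain z where z: "\<And>n. z n \<in> socle sc \<and> norm (z n) = 1"
      and lim: "(\<lambda>n. e * z n) \<longlonglongrightarrow> 0 \<or> (\<lambda>n. z n * e) \<longlonglongrightarrow> 0"
      unfolding topological_divisor_of_zero_in_def by blast
    have "(\<lambda>n. e * z n) = z" "(\<lambda>n. z n * e) = z" using e(2) z by auto
    then have "z \<longlonglongrightarrow> 0" using lim by simp
    then have "(\<lambda>n. norm (z n)) \<longlonglongrightarrow> 0" using tendsto_norm_zero by blast
    then have "(\<lambda>n. 1::real) \<longlonglongrightarrow> 0" using z by simp
    then show False by (simp add: LIMSEQ_const_iff)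
  qed
  then show ?thesis using e(1) by blast
qed

end


definition hb_good :: "'a::real_normed_vector \<Rightarrow> ('a \<times> real) set \<Rightarrow> bool" where
  "hb_good y0 G \<longleftrightarrow> (y0, norm y0) \<in> G \<and>
     (\<forall>x a y b. (x, a) \<in> G \<longrightarrow> (y, b) \<in> G \<longrightarrow> (x + y, a + b) \<in> G) \<and>
     (\<forall>x a r. (x, a) \<in> G \<longrightarrow> (r *\<^sub>R x, r * a) \<in> G) \<and>
     (\<forall>x a. (x, a) \<in> G \<longrightarrow> a \<le> norm x)"

lemma hb_good_add: "hb_good y0 G \<Longrightarrow> (x, a) \<in> G \<Longrightarrow> (y, b) \<in> G \<Longrightarrow> (x + y, a + b) \<in> G"
  unfolding hb_good_def by blast
lemma hb_good_scale: "hb_good y0 G \<Longrightarrow> (x, a) \<in> G \<Longrightarrow> (r *\<^sub>R x, r * a) \<in> G"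
  unfolding hb_good_def by blast
lemma hb_good_le: "hb_good y0 G \<Longrightarrow> (x, a) \<in> G \<Longrightarrow> a \<le> norm x"
  unfolding hb_good_def by blast
lemma hb_good_y0: "hb_good y0 G \<Longrightarrow> (y0, norm y0) \<in> G"
  unfolding hb_good_def by blast
lemma hb_good_zero: "hb_good y0 G \<Longrightarrow> (0, 0) \<in> G"
  using hb_good_scale[of y0 G y0 "norm y0" 0] hb_good_y0[of y0 G] by simp

lemma hb_good_fun:
  assumes G: "hb_good y0 G" and "(x, a) \<in> G" "(x, b) \<in> G"
  shows "a = b"
proof -
  have "((-1) *\<^sub>R x, (-1) * b) \<in> G" using hb_good_scale[OF G assms(3)] .
  then have "(x + (-1) *\<^sub>R x, a + (-1) * b) \<in> G" using hb_good_add[OF G assms(2)] by blast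
  then have 1: "a - b \<le> 0" using hb_good_le[OF G] by fastforce
  have "((-1) *\<^sub>R x, (-1) * a) \<in> G" using hb_good_scale[OF G assms(2)] .
  then have "(x + (-1) *\<^sub>R x, b + (-1) * a) \<in> G" using hb_good_add[OF G assms(3)] by blast
  then have 2: "b - a \<le> 0" using hb_good_le[OF G] by fastforce
  show ?thesis using 1 2 by simp
qed

lemma hb_chain:
  fixes y0 :: "'a::real_normed_vector"
  assumes C: "C \<in> chains {G. hb_good y0 G}"
  shows "\<exists>U\<in>{G. hb_good y0 G}. \<forall>X\<in>C. X \<subseteq> U"
proof (cases "C = {}")
  case True
  define G0 where "G0 = {(r *\<^sub>R y0, r * norm y0) | r. True}"
  have "hb_good y0 G0"
    unfolding hb_good_def G0_def
  proof (intro conjI allI impI)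
    show "(y0, norm y0) \<in> {(r *\<^sub>R y0, r * norm y0) |r. True}" by (auto intro: exI[of _ 1])
  next
    fix x a y b assume "(x, a) \<in> {(r *\<^sub>R y0, r * norm y0) |r. True}" "(y, b) \<in> {(r *\<^sub>R y0, r * norm y0) |r. True}"
    then obtain r s where "x = r *\<^sub>R y0" "a = r * norm y0" "y = s *\<^sub>R y0" "b = s * norm y0" by blast
    then show "(x + y, a + b) \<in> {(r *\<^sub>R y0, r * norm y0) |r. True}"
      by (auto intro!: exI[of _ "r + s"] simp: scaleR_add_left distrib_right)
  next
    fix x a t assume "(x, a) \<in> {(r *\<^sub>R y0, r * norm y0) |r. True}"
    then obtain r where "x = r *\<^sub>R y0" "a = r * norm y0" by blast
    then show "(t *\<^sub>R x, t * a) \<in> {(r *\<^sub>R y0, r * norm y0) |r. True}"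
      by (auto intro!: exI[of _ "t * r"])
  next
    fix x a assume "(x, a) \<in> {(r *\<^sub>R y0, r * norm y0) |r. True}"
    then obtain r where "x = r *\<^sub>R y0" "a = r * norm y0" by blast
    then show "a \<le> norm x" by (simp add: mult_right_mono)
  qed
  then show ?thesis using True by blast
next
  case False
  have CG: "\<And>X. X \<in> C \<Longrightarrow> hb_good y0 X" using chainsD2[OF C] by blast
  have ch: "\<And>X Y. X \<in> C \<Longrightarrow> Y \<in> C \<Longrightarrow> X \<subseteq> Y \<or> Y \<subseteq> X" using chainsD[OF C] by blast
  have "hb_good y0 (\<Union>C)"
    unfolding hb_good_def
  proof (intro conjI allI impI)
    obtain X where "X \<in> C" using False by blast
    then show "(y0, norm y0) \<in> \<Union>C" using hb_good_y0[OF CG] by blast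
  next
    fix x a y b assume "(x, a) \<in> \<Union>C" "(y, b) \<in> \<Union>C"
    then obtain X Y where XY: "X \<in> C" "Y \<in> C" "(x, a) \<in> X" "(y, b) \<in> Y" by blast
    show "(x + y, a + b) \<in> \<Union>C"
    proof (cases "X \<subseteq> Y")
      case True
      then show ?thesis using hb_good_add[OF CG[OF XY(2)], of x a y b] XY by blast
    next
      case False
      then have "Y \<subseteq> X" using ch[OF XY(1,2)] by blast
      then show ?thesis using hb_good_add[OF CG[OF XY(1)], of x a y b] XY by blast
    qed
  next
    fix x a t assume "(x, a) \<in> \<Union>C"
    then obtain X where "X \<in> C" "(x, a) \<in> X" by blast
    then show "(t *\<^sub>R x, t * a) \<in> \<Union>C" using hb_good_scale[OF CG] by blast
  next
    fix x a assume "(x, a) \<in> \<Union>C"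
    then obtain X where "X \<in> C" "(x, a) \<in> X" by blast
    then show "a \<le> norm x" using hb_good_le[OF CG] by blast
  qed
  then show ?thesis by blast
qed

lemma hb_extend:
  fixes y0 :: "'a::real_normed_vector"
  assumes M: "hb_good y0 M" and z: "\<And>a. (z, a) \<notin> M"
  shows "\<exists>M'. hb_good y0 M' \<and> M \<subseteq> M' \<and> M' \<noteq> M"
proof -
  define T where "T = {a - norm (u - z) | u a. (u, a) \<in> M}"
  have Tne: "T \<noteq> {}" unfolding T_def using hb_good_zero[OF M] by blast
  have key: "a - norm (u - z) \<le> norm (w + z) - b" if "(u, a) \<in> M" "(w, b) \<in> M" for u a w b
  proof -
    have "a + b \<le> norm (u + w)" using hb_good_le[OF M hb_good_add[OF M that]] .
    also have "\<dots> = norm ((u - z) + (w + z))" by simp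
    also have "\<dots> \<le> norm (u - z) + norm (w + z)" by (rule norm_triangle_ineq)
    finally show ?thesis by simp
  qed
  have Tbd: "bdd_above T" unfolding T_def bdd_above_def
    using key[OF _ hb_good_zero[OF M]] by (intro exI[of _ "norm (0 + z) - 0"]) blast
  define c where "c = Sup T"
  have c1: "a - norm (u - z) \<le> c" if "(u, a) \<in> M" for u a
    unfolding c_def by (rule cSup_upper[OF _ Tbd]) (use that T_def in blast)
  have c2: "c \<le> norm (w + z) - b" if "(w, b) \<in> M" for w b
    unfolding c_def by (rule cSup_least[OF Tne]) (use that key T_def in blast)
  define M' where "M' = {(x + t *\<^sub>R z, a + t * c) | x a t. (x, a) \<in> M}"
  have dom: "a + t * c \<le> norm (x + t *\<^sub>R z)" if xa: "(x, a) \<in> M" for x a t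
  proof (cases "t = 0")
    case True then show ?thesis using hb_good_le[OF M xa] by simp
  next
    case False
    show ?thesis
    proof (cases "t > 0")
      case True
      have "((1/t) *\<^sub>R x, (1/t) * a) \<in> M" using hb_good_scale[OF M xa] .
      from c2[OF this] have "t * c \<le> t * (norm ((1/t) *\<^sub>R x + z) - (1/t) * a)"
        using True by (simp add: mult_left_mono)
      also have "\<dots> = norm (t *\<^sub>R ((1/t) *\<^sub>R x + z)) - a" using True by (simp add: right_diff_distrib)
      also have "t *\<^sub>R ((1/t) *\<^sub>R x + z) = x + t *\<^sub>R z" using True by (simp add: scaleR_add_right)
      finally show ?thesis by simp
    next
      case False
      then have s: "-t > 0" using \<open>t \<noteq> 0\<close> by simp
      define s where "s = -t"
      have s0: "s > 0" using s s_def by simp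
      have "((1/s) *\<^sub>R x, (1/s) * a) \<in> M" using hb_good_scale[OF M xa] .
      from c1[OF this] have "s * ((1/s) * a - norm ((1/s) *\<^sub>R x - z)) \<le> s * c"
        using s0 by (simp add: mult_left_mono)
      then have "a - norm (s *\<^sub>R ((1/s) *\<^sub>R x - z)) \<le> s * c" using s0 by (simp add: right_diff_distrib)
      also have "s *\<^sub>R ((1/s) *\<^sub>R x - z) = x + t *\<^sub>R z" using s0 s_def by (simp add: scaleR_diff_right)
      finally show ?thesis using s_def by simp
    qed
  qed
  have "hb_good y0 M'"
    unfolding hb_good_def
  proof (intro conjI allI impI)
    show "(y0, norm y0) \<in> M'" unfolding M'_def using hb_good_y0[OF M]
      by (intro CollectI exI[of _ y0] exI[of _ "norm y0"] exI[of _ 0]) simp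
  next
    fix x a y b assume "(x, a) \<in> M'" "(y, b) \<in> M'"
    then obtain x1 a1 t1 x2 a2 t2 where h: "x = x1 + t1 *\<^sub>R z" "a = a1 + t1 * c" "(x1, a1) \<in> M"
      "y = x2 + t2 *\<^sub>R z" "b = a2 + t2 * c" "(x2, a2) \<in> M" unfolding M'_def by blast
    then show "(x + y, a + b) \<in> M'" unfolding M'_def using hb_good_add[OF M h(3) h(6)]
      by (intro CollectI exI[of _ "x1 + x2"] exI[of _ "a1 + a2"] exI[of _ "t1 + t2"])
        (simp add: algebra_simps)
  next
    fix x a r assume "(x, a) \<in> M'"
    then obtain x1 a1 t1 where h: "x = x1 + t1 *\<^sub>R z" "a = a1 + t1 * c" "(x1, a1) \<in> M"
      unfolding M'_def by blast
    then show "(r *\<^sub>R x, r * a) \<in> M'" unfolding M'_def using hb_good_scale[OF M h(3), of r]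
      by (intro CollectI exI[of _ "r *\<^sub>R x1"] exI[of _ "r * a1"] exI[of _ "r * t1"])
        (simp add: algebra_simps)
  next
    fix x a assume "(x, a) \<in> M'"
    then obtain x1 a1 t1 where h: "x = x1 + t1 *\<^sub>R z" "a = a1 + t1 * c" "(x1, a1) \<in> M"
      unfolding M'_def by blast
    then show "a \<le> norm x" using dom[OF h(3)] by simp
  qed
  moreover have "M \<subseteq> M'" unfolding M'_def by (force intro: exI[of _ 0])
  moreover have "(z, c) \<in> M'" unfolding M'_def using hb_good_zero[OF M]
    by (intro CollectI exI[of _ 0] exI[of _ 0] exI[of _ 1]) simp
  ultimately show ?thesis using z by blast
qed

lemma hahn_banach_real:
  fixes y0 :: "'a::real_normed_vector"
  shows "\<exists>\<psi>. bounded_linear \<psi> \<and> \<psi> y0 = norm y0 \<and> (\<forall>x. \<bar>\<psi> x\<bar> \<le> norm x)"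
proof -
  obtain M where M: "M \<in> {G. hb_good y0 G}" and Mmax: "\<forall>X\<in>{G. hb_good y0 G}. M \<subseteq> X \<longrightarrow> X = M"
    using Zorn_Lemma2[of "{G. hb_good y0 G}"] hb_chain by blast
  have MG: "hb_good y0 M" using M by simp
  have tot: "\<exists>a. (x, a) \<in> M" for x
  proof (rule ccontr)
    assume "\<nexists>a. (x, a) \<in> M"
    then obtain M' where "hb_good y0 M'" "M \<subseteq> M'" "M' \<noteq> M" using hb_extend[OF MG] by blast
    then show False using Mmax by blast
  qed
  define \<psi> where "\<psi> x = (THE a. (x, a) \<in> M)" for x
  have psi: "(x, \<psi> x) \<in> M" for x
    unfolding \<psi>_def using tot[of x] hb_good_fun[OF MG] by (metis theI)
  have psi_eq: "(x, a) \<in> M \<Longrightarrow> \<psi> x = a" for x a using hb_good_fun[OF MG psi] by blast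
  have add: "\<psi> (x + y) = \<psi> x + \<psi> y" for x y by (rule psi_eq, rule hb_good_add[OF MG psi psi])
  have scale: "\<psi> (r *\<^sub>R x) = r *\<^sub>R \<psi> x" for r x by (simp, rule psi_eq, rule hb_good_scale[OF MG psi])
  have le: "\<psi> x \<le> norm x" for x by (rule hb_good_le[OF MG psi])
  have abs: "\<bar>\<psi> x\<bar> \<le> norm x" for x
  proof -
    have "\<psi> (- x) = - \<psi> x" using scale[of "-1" x] by simp
    then show ?thesis using le[of x] le[of "-x"] by simp
  qed
  have "bounded_linear \<psi>"
    by (rule bounded_linear_intro[of _ 1]) (use add scale abs in auto)
  moreover have "\<psi> y0 = norm y0" by (rule psi_eq, rule hb_good_y0[OF MG])
  ultimately show ?thesis using abs by blast
qed



context cba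
begin

lemma sc_decomp: "sc c x = Re c *\<^sub>R x + Im c *\<^sub>R sc \<i> x"
proof -
  have "sc c x = sc (complex_of_real (Re c) + complex_of_real (Im c) * \<i>) x"
    by (metis complex_eq mult.commute)
  also have "\<dots> = Re c *\<^sub>R x + Im c *\<^sub>R sc \<i> x"
    by (simp add: sc_add_left sc_assoc[symmetric] sc_real)
  finally show ?thesis .
qed

lemma complex_functional:
  "\<exists>\<phi> :: 'a \<Rightarrow> complex. bounded_linear \<phi> \<and> (\<forall>c x. \<phi> (sc c x) = c * \<phi> x) \<and> Re (\<phi> y0) = norm y0"
proof -
  obtain \<psi> where psi: "bounded_linear \<psi>" "\<psi> y0 = norm y0" "\<And>x. \<bar>\<psi> x\<bar> \<le> norm x"
    using hahn_banach_real[of y0] by blast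
  interpret psi: bounded_linear \<psi> by (rule psi(1))
  define \<phi> where "\<phi> x = Complex (\<psi> x) (- \<psi> (sc \<i> x))" for x
  have isc: "sc \<i> (r *\<^sub>R x) = r *\<^sub>R sc \<i> x" for r x
    by (simp add: sc_real[symmetric] sc_assoc mult.commute)
  have "bounded_linear \<phi>"
  proof (rule bounded_linear_intro[of _ 2])
    fix x y show "\<phi> (x + y) = \<phi> x + \<phi> y"
      unfolding \<phi>_def by (simp add: sc_add_right psi.add complex_eq_iff)
  next
    fix r x show "\<phi> (r *\<^sub>R x) = r *\<^sub>R \<phi> x"
      unfolding \<phi>_def by (simp add: isc psi.scaleR complex_eq_iff)
  next
    fix x
    have "cmod (\<phi> x) \<le> \<bar>\<psi> x\<bar> + \<bar>\<psi> (sc \<i> x)\<bar>" using cmod_le[of "\<phi> x"] unfolding \<phi>_def by simp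
    also have "\<dots> \<le> norm x + norm (sc \<i> x)" using psi(3) by (intro add_mono) auto
    finally show "norm (\<phi> x) \<le> norm x * 2" by (simp add: sc_norm)
  qed
  moreover have "\<phi> (sc c x) = c * \<phi> x" for c x
  proof -
    have 1: "\<psi> (sc c x) = Re c * \<psi> x + Im c * \<psi> (sc \<i> x)"
      unfolding sc_decomp[of c x] by (simp add: psi.add psi.scaleR)
    have "sc \<i> (sc c x) = sc (\<i> * c) x" by (simp add: sc_assoc)
    then have 2: "\<psi> (sc \<i> (sc c x)) = - Im c * \<psi> x + Re c * \<psi> (sc \<i> x)"
      unfolding sc_decomp[of "\<i> * c" x] by (simp add: psi.add psi.diff psi.scaleR)
    show ?thesis unfolding \<phi>_def using 1 2 by (simp add: complex_eq_iff algebra_simps)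
  qed
  moreover have "Re (\<phi> y0) = norm y0" unfolding \<phi>_def using psi(2) by simp
  ultimately show ?thesis by blast
qed

lemma gelfand_mazur:
  assumes ff: "f * f = f" and f0: "f \<noteq> 0" and xf: "x = f * x * f"
    and inv: "\<And>l. \<exists>u. u = f * u * f \<and> u * (x - sc l f) = f \<and> (x - sc l f) * u = f"
  shows False
proof -
  obtain r where r: "\<And>l. r l = f * r l * f \<and> r l * (x - sc l f) = f \<and> (x - sc l f) * r l = f"
    using inv by metis
  have rf: "r l * f = r l" for l using r[of l] ff by (metis mult.assoc)
  have fr: "f * r l = r l" for l using r[of l] ff by (metis mult.assoc)
  have res: "r l - r m = sc (l - m) (r l * r m)" for l m
  proof -
    have 1: "r l * (x - sc m f) * r m = r l" using r[of m] rf by (simp add: mult.assoc)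
    have 2: "r l * (x - sc l f) * r m = r m" using r[of l] fr by simp
    have 3: "(x - sc m f) - (x - sc l f) = sc (l - m) f" by (simp add: sc_diff_left)
    have "r l - r m = r l * (x - sc m f) * r m - r l * (x - sc l f) * r m"
      using 1 2 by simp
    also have "\<dots> = r l * ((x - sc m f) - (x - sc l f)) * r m"
      by (simp only: right_diff_distrib left_diff_distrib)
    also have "\<dots> = sc (l - m) (r l * f * r m)"
      unfolding 3 by (simp add: sc_mult_right[symmetric] sc_mult_left[symmetric] mult.assoc)
    finally show ?thesis using rf by simp
  qed
  have resn: "norm (r l - r m) \<le> cmod (l - m) * (norm (r l) * norm (r m))" for l m
    unfolding res sc_norm by (intro mult_left_mono norm_mult_ineq) auto
  have loc: "norm (r l) \<le> 2 * norm (r m)" if "cmod (l - m) * norm (r m) \<le> 1/2" for l m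
  proof -
    have "norm (r l) \<le> norm (r m) + norm (r l - r m)" by (metis add.commute diff_add_cancel norm_triangle_ineq)
    also have "norm (r l - r m) \<le> (cmod (l - m) * norm (r m)) * norm (r l)"
      using resn[of l m] by (simp add: mult_ac)
    also have "\<dots> \<le> 1/2 * norm (r l)" by (rule mult_right_mono[OF that]) simp
    finally show ?thesis by simp
  qed
  have cont: "(r \<longlongrightarrow> r m) (at m)" for m
  proof -
    define K where "K = norm (r m) + 1"
    have K: "K > 0" unfolding K_def using norm_ge_zero[of "r m"] by linarith
    have ev: "\<forall>\<^sub>F l in at m. norm (r l - r m) \<le> 2 * K * K * cmod (l - m)"
      unfolding eventually_at
    proof (intro exI[of _ "1 / (2 * K)"] conjI ballI impI)
      show "0 < 1 / (2 * K)" using K by simp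
      fix l assume "l \<in> UNIV" "l \<noteq> m \<and> dist l m < 1 / (2 * K)"
      then have d: "cmod (l - m) * K \<le> 1/2" using K by (simp add: dist_norm field_simps)
      have "cmod (l - m) * norm (r m) \<le> cmod (l - m) * K" unfolding K_def by (simp add: mult_left_mono)
      then have "norm (r l) \<le> 2 * norm (r m)" using d by (intro loc) linarith
      then have nl: "norm (r l) \<le> 2 * K" unfolding K_def by simp
      have "norm (r l - r m) \<le> cmod (l - m) * (norm (r l) * norm (r m))" by (rule resn)
      also have "\<dots> \<le> cmod (l - m) * ((2 * K) * K)"
        by (intro mult_left_mono mult_mono nl) (auto simp: K_def)
      finally show "norm (r l - r m) \<le> 2 * K * K * cmod (l - m)" by (simp add: mult_ac)
    qed
    have "((\<lambda>l. 2 * K * K * cmod (l - m)) \<longlongrightarrow> 2 * K * K * cmod (m - m)) (at m)"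
      by (intro tendsto_intros)
    then have "((\<lambda>l. 2 * K * K * cmod (l - m)) \<longlongrightarrow> 0) (at m)" by simp
    from Lim_null_comparison[OF ev this] show ?thesis by (simp add: Lim_null[symmetric])
  qed
  have r00: "r 0 \<noteq> 0" using r[of 0] f0 by auto
  obtain \<phi> :: "'a \<Rightarrow> complex" where phi: "bounded_linear \<phi>" "\<And>c x. \<phi> (sc c x) = c * \<phi> x"
    "Re (\<phi> (r 0)) = norm (r 0)"
    using complex_functional[of "r 0"] by blast
  interpret phi: bounded_linear \<phi> by (rule phi(1))
  define F where "F l = \<phi> (r l)" for l
  have deriv: "(F has_field_derivative \<phi> (r m * r m)) (at m)" for m
    unfolding has_field_derivative_iff
  proof -
    have ev: "\<forall>\<^sub>F l in at m. \<phi> (r l * r m) = (F l - F m) / (l - m)"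
      unfolding eventually_at
    proof (intro exI[of _ 1] conjI ballI impI)
      fix l assume "l \<in> UNIV" "l \<noteq> m \<and> dist l m < 1"
      then have lm: "l - m \<noteq> 0" by simp
      have "F l - F m = \<phi> (r l - r m)" unfolding F_def by (simp add: phi.diff)
      also have "\<dots> = (l - m) * \<phi> (r l * r m)" unfolding res phi(2) ..
      finally show "\<phi> (r l * r m) = (F l - F m) / (l - m)" using lm by simp
    qed simp
    have "((\<lambda>l. \<phi> (r l * r m)) \<longlongrightarrow> \<phi> (r m * r m)) (at m)"
      by (intro phi.tendsto tendsto_mult cont tendsto_const)
    then show "((\<lambda>l. (F l - F m) / (l - m)) \<longlongrightarrow> \<phi> (r m * r m)) (at m)"
      using tendsto_cong[OF ev] by blast
  qed
  have hol: "F holomorphic_on UNIV"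
    unfolding holomorphic_on_def field_differentiable_def using deriv by auto
  obtain B where B: "B > 0" "\<And>v. norm (\<phi> v) \<le> norm v * B" using phi.pos_bounded by blast
  have rbound: "(cmod l - norm x) * norm (r l) \<le> norm f" for l
  proof -
    have "r l * x - sc l (r l) = f"
      using r[of l] rf[of l] by (simp add: right_diff_distrib sc_mult_right[symmetric])
    then have "sc l (r l) = r l * x - f" by (simp add: algebra_simps)
    then have "cmod l * norm (r l) = norm (r l * x - f)" by (metis sc_norm)
    also have "\<dots> \<le> norm (r l) * norm x + norm f"
      using norm_triangle_ineq4[of "r l * x" f] norm_mult_ineq[of "r l" x] by linarith
    finally show ?thesis by (simp add: algebra_simps)
  qed
  have lim: "(F \<longlongrightarrow> 0) at_infinity"
    unfolding Lim_at_infinity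
  proof (intro allI impI)
    fix e :: real assume e: "e > 0"
    define b where "b = norm x + 2 * B * norm f / e + 1"
    show "\<exists>b. \<forall>l. b \<le> norm l \<longrightarrow> dist (F l) 0 < e"
    proof (intro exI[of _ b] allI impI)
      fix l :: complex assume "b \<le> norm l"
      then have lb: "cmod l - norm x \<ge> 2 * B * norm f / e + 1" unfolding b_def by simp
      have pos: "cmod l - norm x > 0" using lb B e by (smt (verit) divide_nonneg_pos mult_nonneg_nonneg norm_ge_zero)
      have Fle: "cmod (F l) \<le> norm (r l) * B" unfolding F_def using B(2) .
      show "dist (F l) 0 < e"
      proof (rule ccontr)
        assume "\<not> dist (F l) 0 < e"
        then have "e \<le> norm (r l) * B" using Fle by simp
        then have "e * (cmod l - norm x) \<le> norm (r l) * B * (cmod l - norm x)"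
          using pos by (simp add: mult_right_mono)
        also have "\<dots> = B * ((cmod l - norm x) * norm (r l))" by (simp add: mult_ac)
        also have "\<dots> \<le> B * norm f" using rbound[of l] B by (simp add: mult_left_mono)
        finally have 1: "e * (cmod l - norm x) \<le> B * norm f" .
        have "e * (cmod l - norm x) \<ge> e * (2 * B * norm f / e + 1)"
          using lb e by (simp add: mult_left_mono)
        also have "e * (2 * B * norm f / e + 1) = 2 * B * norm f + e" using e by (simp add: field_simps)
        finally have "2 * B * norm f + e \<le> B * norm f" using 1 by linarith
        moreover have "B * norm f \<ge> 0" using B by simp
        moreover have "2 * B * norm f = 2 * (B * norm f)" by simp
        ultimately show False using e by linarith
      qed
    qed
  qed
  have "F 0 = 0" by (rule Liouville_weak_0[OF hol lim])
  then have "Re (\<phi> (r 0)) = 0" unfolding F_def by simp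
  then show False using phi(3) r00 by simp
qed

end


context cba
begin

lemma cspan_real_span:
  assumes "finite Q"
  shows "\<exists>Q'. finite Q' \<and> cspan sc Q \<subseteq> span Q'"
proof -
  define Q' where "Q' = Q \<union> sc \<i> ` Q"
  have "cspan sc Q \<subseteq> {x. x \<in> span Q' \<and> sc \<i> x \<in> span Q'}"
  proof (rule cspan_minimal)
    show "Q \<subseteq> {x. x \<in> span Q' \<and> sc \<i> x \<in> span Q'}"
      unfolding Q'_def by (auto intro: span_base)
    show "0 \<in> {x. x \<in> span Q' \<and> sc \<i> x \<in> span Q'}" by (simp add: span_zero)
  next
    fix x y assume "x \<in> {x. x \<in> span Q' \<and> sc \<i> x \<in> span Q'}" "y \<in> {x. x \<in> span Q' \<and> sc \<i> x \<in> span Q'}"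
    then show "x + y \<in> {x. x \<in> span Q' \<and> sc \<i> x \<in> span Q'}" by (simp add: span_add sc_add_right)
  next
    fix c x assume x: "x \<in> {x. x \<in> span Q' \<and> sc \<i> x \<in> span Q'}"
    have 1: "sc c x \<in> span Q'" unfolding sc_decomp[of c x] using x
      by (intro span_add span_scale) auto
    have "sc \<i> (sc c x) = sc (\<i> * c) x" by (simp add: sc_assoc)
    then have 2: "sc \<i> (sc c x) \<in> span Q'" unfolding sc_decomp[of "\<i> * c" x] using x
      by (simp only:) (intro span_add span_scale, auto)
    show "sc c x \<in> {x. x \<in> span Q' \<and> sc \<i> x \<in> span Q'}" using 1 2 by simp
  qed
  then have "cspan sc Q \<subseteq> span Q'" by blast
  moreover have "finite Q'" unfolding Q'_def using assms by simp
  ultimately show ?thesis by blast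
qed

lemma inj_fin:
  assumes lin: "linear T" and inj: "inj_on T S"
    and S: "0 \<in> S" "\<And>x y. x \<in> S \<Longrightarrow> y \<in> S \<Longrightarrow> x + y \<in> S" "\<And>r x. x \<in> S \<Longrightarrow> r *\<^sub>R x \<in> S"
    and Q: "finite Q" "T ` S \<subseteq> cspan sc Q"
  shows "\<exists>F. finite F \<and> F \<subseteq> S \<and> S \<subseteq> cspan sc F"
proof -
  obtain Q' where Q': "finite Q'" "cspan sc Q \<subseteq> span Q'" using cspan_real_span[OF Q(1)] by blast
  obtain B where B: "B \<subseteq> T ` S" "independent B" "T ` S \<subseteq> span B"
    using maximal_independent_subset[of "T ` S"] by blast
  have "finite B" using independent_span_bound[OF Q'(1) B(2)] B(1) Q(2) Q'(2) by blast
  define F where "F = inv_into S T ` B"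
  have FS: "F \<subseteq> S" unfolding F_def using B(1) by (auto intro: inv_into_into)
  have TF: "T ` F = B" unfolding F_def using B(1) by (simp add: image_image f_inv_into_f subset_iff)
  have Ssub: "subspace S" unfolding subspace_def using S by blast
  have spF: "span F \<subseteq> S" using span_minimal[OF FS Ssub] .
  have "S \<subseteq> span F"
  proof
    fix s assume s: "s \<in> S"
    then have "T s \<in> span (T ` F)" using B(3) TF by blast
    then have "T s \<in> T ` span F" using span_linear_image[OF lin] by blast
    then obtain s' where s': "s' \<in> span F" "T s = T s'" by blast
    have "s = s'" using inj s s' spF unfolding inj_on_def by blast
    then show "s \<in> span F" using s' by simp
  qed
  moreover have "span F \<subseteq> cspan sc F"
    by (rule span_minimal) (auto simp: subspace_def cspan_base cspan_zero cspan_add cspan_scaleR)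
  ultimately show ?thesis using FS \<open>finite B\<close> F_def by blast
qed

end

context ss
begin

lemma left_inv:
  assumes ff: "f * f = f" and fm: "minimal_left_ideal sc (range (\<lambda>b. b * f))"
    and w: "w = f * w * f" "w \<noteq> 0"
  shows "\<exists>u. u = f * u * f \<and> u * w = f"
proof -
  have fw: "f * w = w" using w(1) ff by (metis mult.assoc)
  have wf: "w * f = w" using w(1) ff by (metis mult.assoc)
  have "range (\<lambda>b. b * w) \<subseteq> range (\<lambda>b. b * f)"
  proof
    fix y assume "y \<in> range (\<lambda>b. b * w)"
    then obtain b where "y = b * w" by blast
    then have "y = (b * w) * f" using wf by (simp add: mult.assoc)
    then show "y \<in> range (\<lambda>b. b * f)" by blast
  qed
  moreover have "w \<in> range (\<lambda>b. b * w)" by (rule range_eqI[of _ _ 1]) simp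
  ultimately have "range (\<lambda>b. b * w) = range (\<lambda>b. b * f)"
    using minimal_eq[OF fm li_principal] w(2) by blast
  moreover have "f \<in> range (\<lambda>b. b * f)" by (rule range_eqI[of _ _ 1]) simp
  ultimately obtain b where b: "f = b * w" by (metis (no_types, lifting) imageE)
  define u where "u = f * b * f"
  have "u * w = f * b * (f * w)" unfolding u_def by (simp add: mult.assoc)
  also have "\<dots> = f" using fw b ff by (simp add: mult.assoc)
  finally have "u * w = f" .
  moreover have "u = f * u * f" unfolding u_def using ff by (metis mult.assoc)
  ultimately show ?thesis by blast
qed

lemma min_corner:
  assumes ff: "f * f = f" and fm: "minimal_left_ideal sc (range (\<lambda>b. b * f))"
  shows "\<exists>c. f * y * f = sc c f"
proof (rule ccontr)
  assume H: "\<nexists>c. f * y * f = sc c f"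
  have f0: "f \<noteq> 0"
  proof
    assume "f = 0"
    then have "range (\<lambda>b. b * f) = {0}" by auto
    then show False using fm unfolding minimal_left_ideal_def by blast
  qed
  define d where "d = f * y * f"
  have dd: "d = f * d * f" unfolding d_def using ff by (metis mult.assoc)
  have fsc: "f * sc c f * f = sc c f" for c using ff by (simp add: sc_mult_left[symmetric] sc_mult_right[symmetric] mult.assoc)
  show False
  proof (rule gelfand_mazur[OF ff f0 dd])
    fix l
    define w where "w = d - sc l f"
    have wf: "w = f * w * f" unfolding w_def using dd fsc
      by (simp add: right_diff_distrib left_diff_distrib)
    have w0: "w \<noteq> 0" unfolding w_def d_def using H by auto
    obtain u where u: "u = f * u * f" "u * w = f" using left_inv[OF ff fm wf w0] by blast
    have u0: "u \<noteq> 0" using u(2) f0 by auto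
    obtain v where v: "v = f * v * f" "v * u = f" using left_inv[OF ff fm u(1) u0] by blast
    have "v = v * f" using v(1) ff by (metis mult.assoc)
    also have "\<dots> = v * u * w" using u(2) by (simp add: mult.assoc)
    also have "\<dots> = f * w" using v(2) by simp
    also have "\<dots> = w" using wf ff by (metis mult.assoc)
    finally have "w * u = f" using v(2) by simp
    then show "\<exists>u. u = f * u * f \<and> u * (d - sc l f) = f \<and> (d - sc l f) * u = f"
      using u unfolding w_def by blast
  qed
qed

lemma corner_1d:
  assumes ff: "f * f = f" and fm: "minimal_left_ideal sc (range (\<lambda>b. b * f))"
    and gg: "g * g = g" and gm: "minimal_left_ideal sc (range (\<lambda>b. b * g))"
  shows "\<exists>W. \<forall>y. \<exists>c. g * y * f = sc c W"
proof (cases "\<forall>y. g * y * f = 0")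
  case True
  then show ?thesis by (intro exI[of _ 0]) auto
next
  case False
  then obtain y0 where y0: "g * y0 * f \<noteq> 0" by blast
  define w0 where "w0 = g * y0 * f"
  have w0f: "w0 * f = w0" unfolding w0_def using ff by (simp add: mult.assoc)
  have gw0: "g * w0 = w0" unfolding w0_def using gg by (simp add: mult.assoc[symmetric])
  have "range (\<lambda>b. b * w0) \<subseteq> range (\<lambda>b. b * f)"
  proof
    fix y assume "y \<in> range (\<lambda>b. b * w0)"
    then obtain b where "y = b * w0" by blast
    then have "y = (b * w0) * f" using w0f by (simp add: mult.assoc)
    then show "y \<in> range (\<lambda>b. b * f)" by blast
  qed
  moreover have "w0 \<in> range (\<lambda>b. b * w0)" by (rule range_eqI[of _ _ 1]) simp
  ultimately have "range (\<lambda>b. b * w0) = range (\<lambda>b. b * f)"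
    using minimal_eq[OF fm li_principal] y0 w0_def by blast
  moreover have "f \<in> range (\<lambda>b. b * f)" by (rule range_eqI[of _ _ 1]) simp
  ultimately obtain b where b: "f = b * w0" by (metis (no_types, lifting) imageE)
  show ?thesis
  proof (intro exI[of _ w0] allI)
    fix y
    define u where "u = g * y * f"
    have gu: "g * u = u" unfolding u_def using gg by (simp add: mult.assoc[symmetric])
    obtain c where c: "g * (u * b) * g = sc c g" using min_corner[OF gg gm] by blast
    have gu2: "g * (u * x) = u * x" for x using gu by (metis mult.assoc)
    have "u = u * f" unfolding u_def using ff by (simp add: mult.assoc)
    also have "\<dots> = u * b * w0" using b by (simp add: mult.assoc)
    also have "\<dots> = g * (u * b) * g * w0" using gu2 gw0 by (simp add: mult.assoc)
    also have "\<dots> = sc c w0" using c gw0 by (simp add: sc_mult_left[symmetric])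
    finally show "\<exists>c. g * y * f = sc c w0" unfolding u_def by blast
  qed
qed

lemma nzd_fin:
  assumes a: "a \<in> socle sc"
    and H: "\<And>z. z \<in> socle sc \<Longrightarrow> z \<noteq> 0 \<Longrightarrow> a * z \<noteq> 0 \<and> z * a \<noteq> 0"
  shows "cfinite_dim sc (socle sc)"
proof -
  obtain F d where F: "finite F" "F \<subseteq> UU" "a = (\<Sum>v\<in>F. sc (d v) v)"
    using a unfolding socle_def cspan_def by blast
  have "\<forall>g\<in>F. \<exists>f. f * f = f \<and> minimal_left_ideal sc (range (\<lambda>b. b * f)) \<and> g * f = g"
  proof
    fix g assume "g \<in> F"
    then obtain L where L: "minimal_left_ideal sc L" "g \<in> L" using F(2) by blast
    obtain f where f: "f * f = f" "f \<in> L" "L = range (\<lambda>b. b * f)" using minimal_idem[OF L(1)] by blast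
    obtain b where "g = b * f" using L(2) f(3) by blast
    then have "g * f = g" using f(1) by (simp add: mult.assoc)
    then show "\<exists>f. f * f = f \<and> minimal_left_ideal sc (range (\<lambda>b. b * f)) \<and> g * f = g"
      using f L by metis
  qed
  then obtain P where P: "\<And>g. g \<in> F \<Longrightarrow> P g * P g = P g \<and> minimal_left_ideal sc (range (\<lambda>b. b * P g)) \<and> g * P g = g"
    by metis
  have "\<forall>w\<in>F. \<forall>v\<in>F. \<exists>W. \<forall>y. \<exists>c. P w * y * P v = sc c W"
    using corner_1d P by blast
  then obtain W where W: "\<And>w v y. w \<in> F \<Longrightarrow> v \<in> F \<Longrightarrow> \<exists>c. P w * y * P v = sc c (W w v)"
    by metis
  define av where "av v = sc (d v) v" for v
  have avP: "av v * P v = av v" if "v \<in> F" for v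
    unfolding av_def using P[OF that] by (simp add: sc_mult_left[symmetric])
  define Q where "Q = (\<lambda>(w, v). av w * W w v) ` (F \<times> F)"
  have Qfin: "finite Q" unfolding Q_def using F(1) by simp
  define T where "T z = a * z * a" for z
  have lin: "linear T" unfolding T_def by (rule linearI) (simp_all add: algebra_simps)
  have aeq: "a = (\<Sum>v\<in>F. av v)" unfolding F(3) av_def ..
  have TQ: "T z \<in> cspan sc Q" for z
  proof -
    have "T z = (\<Sum>v\<in>F. \<Sum>w\<in>F. av w * z * av v)"
      unfolding T_def aeq by (simp add: sum_distrib_left sum_distrib_right)
    also have "\<dots> \<in> cspan sc Q"
    proof (intro cspan_sum)
      fix v w assume vw: "v \<in> F" "w \<in> F"
      have wv: "w \<in> F" "v \<in> F" using vw by auto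
      obtain c where c: "P w * (z * av v) * P v = sc c (W w v)" using W[OF wv] by blast
      have "av w * z * av v = av w * (P w * (z * av v) * P v)"
        using avP[OF wv(1)] avP[OF wv(2)] by (metis mult.assoc)
      also have "\<dots> = sc c (av w * W w v)" using c by (simp add: sc_mult_right)
      finally have "av w * z * av v = sc c (av w * W w v)" .
      moreover have "av w * W w v \<in> Q" unfolding Q_def using wv by force
      ultimately show "av w * z * av v \<in> cspan sc Q" by (simp add: cspan_sc cspan_base)
    qed
    finally show ?thesis .
  qed
  have inj: "inj_on T (socle sc)"
  proof (rule inj_onI)
    fix z z' assume z: "z \<in> socle sc" "z' \<in> socle sc" "T z = T z'"
    define q where "q = z - z'"
    have qS: "q \<in> socle sc" unfolding q_def using soc_diff z by blast
    have "a * q * a = 0" unfolding q_def using z(3) unfolding T_def by (simp add: algebra_simps)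
    then have "a * (q * a) = 0" by (simp add: mult.assoc)
    then have "q * a = 0" using H[OF soc_right[OF qS]] by blast
    then have "q = 0" using H[OF qS] by blast
    then show "z = z'" unfolding q_def by simp
  qed
  obtain F' where "finite F'" "F' \<subseteq> socle sc" "socle sc \<subseteq> cspan sc F'"
    using inj_fin[OF lin inj soc_zero soc_add soc_scaleR Qfin] TQ by blast
  then show ?thesis unfolding cfinite_dim_def by blast
qed

lemma dirB:
  assumes "\<not> cfinite_dim sc (socle sc)" and a: "a \<in> socle sc"
  shows "topological_divisor_of_zero_in (socle sc) a"
proof -
  obtain z where z: "z \<in> socle sc" "z \<noteq> 0" "a * z = 0 \<or> z * a = 0"
    using nzd_fin[OF a] assms(1) by blast
  define z' where "z' = (1 / norm z) *\<^sub>R z"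
  have "z' \<in> socle sc" unfolding z'_def using soc_scaleR[OF z(1)] .
  moreover have "norm z' = 1" unfolding z'_def using z(2) by simp
  moreover have "a * z' = 0 \<or> z' * a = 0" unfolding z'_def using z(3) by auto
  ultimately show ?thesis unfolding topological_divisor_of_zero_in_def
    by (intro exI[of _ "\<lambda>n. z'"]) auto
qed

end

theorem theorem1p9:
  fixes sc :: "complex \<Rightarrow> 'a::{banach,real_normed_algebra_1} \<Rightarrow> 'a"
  assumes "complex_banach_algebra_1 sc"
    and "semisimple sc"
  shows "\<not> cfinite_dim sc (socle sc) \<longleftrightarrow>
         (\<forall>a\<in>socle sc. topological_divisor_of_zero_in (socle sc) a)"
proof -
  interpret ss sc using assms by (unfold_locales) auto
  show ?thesis using dirA dirB by blast
qed


end
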